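(* Let $k=0$ and let $a$ be a regular scale factor which is an even function on $\mathbb R$, such that either $\infty>\dot a(0^+)>0$, or $\dot a(0)=0$ but the $n$th derivative $a^{(n)}(0)\ne0$ for some $n$. Then $g_{\theta\theta}(\tau,\rho)$ and $g_{\phi\phi}(\tau,\rho,\theta)$ are continuous on $D_{\mathrm{polar}}$ (with values at $\rho=\rho_{\mathcal M_\tau}$ defined as limits as $t_0\to0$) and vanish at $(\tau,\rho_{\mathcal M_\tau})$ for every $\tau>0$.
   Context: A function $a:[0,\infty)\to[0,\infty)$ is a regular scale factor if: (a) $a(0)=0$; (b) $a$ is increasing and continuous on $[0,\infty)$, twice continuously differentiable on $(0,\infty)$, with an inverse function on $[0,\infty)$; (c) $\frac{a(t)\ddot a(t)}{\dot a(t)^2}\le1$ for all $t>0$ (presupposing $\dot a(t)\ne0$). Here $a$ is regarded on $\mathbb R$ via $a(-t)=a(t)$; $\dot a(0^+)=\lim_{t\to0^+}\dot a(t)$. For $0<s<\tau$, $\chi_s(\tau)=\int_s^\tau\frac{1}{a(t)}\frac{a(\tau)}{\sqrt{a^2(\tau)-a^2(t)}}dt$. For $\tau>0$, $\rho_{\mathcal M_\tau}=\int_0^\tau\frac{a(t)}{\sqrt{a^2(\tau)-a^2(t)}}dt$; for $0<\rho<2\rho_{\mathcal M_\tau}$, $t_0(\tau,\rho)$ is the unique $t_0\in(-\tau,\tau)$ with $\rho=\int_{t_0}^\tau\frac{a(t)}{\sqrt{a^2(\tau)-a^2(t)}}dt$. Define $f(\tau,t_0)=\int_{t_0}^{\tau}\frac{\ddot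 a(t)}{\dot a(t)^2}\left(\frac{\sqrt{a^2(\tau)-a^2(t_0)}}{\sqrt{a^2(\tau)-a^2(t)}}-1\right)dt$ for $0\le t_0<\tau$, $f(\tau,t_0)=2f(\tau,0)-f(\tau,-t_0)$ for $-\tau<t_0<0$, and $g_{\tau\tau}(\tau,\rho)=-[1-\dot a(\tau)f(\tau,t_0(\tau,\rho))]^2$. Let $\rho_{\max}(\tau)=\inf\{\rho\in(0,2\rho_{\mathcal M_\tau}):g_{\tau\tau}(\tau,\rho)=0\}$ if nonempty, else $2\rho_{\mathcal M_\tau}$. $D_{\mathrm{polar}}=\{(\tau,\rho,\theta,\phi):\tau>0,\ 0<\rho<\rho_{\max}(\tau),\ \theta\in I_\pi,\ \phi\in I_{2\pi}\}$ with $I_\pi,I_{2\pi}$ open intervals of lengths $\pi,2\pi$. For $t_0=t_0(\tau,\rho)\ne0$: $g_{\theta\theta}(\tau,\rho)=a^2(t_0)\chi_{|t_0|}(\tau)^2$ and $g_{\phi\phi}(\tau,\rho,\theta)=g_{\theta\theta}(\tau,\rho)\sin^2\theta$. *)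

theory Defs
  imports "HOL-Analysis.Analysis"
begin

text \<open>Scale factor a is a function on the reals; the paper's convention a(-t) = a(t)
  is imposed as a hypothesis of the theorem. Derivatives for t > 0 are taken via deriv.\<close>

definition regular_scale_factor :: "(real \<Rightarrow> real) \<Rightarrow> bool" where
  "regular_scale_factor a \<longleftrightarrow>
     a 0 = 0 \<and>
     strict_mono_on {0..} a \<and>
     continuous_on {0..} a \<and>
     bij_betw a {0..} {0..} \<and>
     (\<exists>a' a''. (\<forall>t>0. (a has_real_derivative a' t) (at t) \<and>
                          (a' has_real_derivative a'' t) (at t)) \<and>
                continuous_on {0<..} a'') \<and>
     (\<forall>t>0. deriv a t \<noteq> 0 \<and>
            a t * deriv (deriv a) t / (deriv a t)\<^sup>2 \<le> 1)"

definition chi :: "(real \<Rightarrow> real) \<Rightarrow> real \<Rightarrow> real \<Rightarrow> real" where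
  "chi a s \<tau> = integral {s..\<tau>} (\<lambda>t. 1 / a t * (a \<tau> / sqrt ((a \<tau>)\<^sup>2 - (a t)\<^sup>2)))"

definition rhoM :: "(real \<Rightarrow> real) \<Rightarrow> real \<Rightarrow> real" where
  "rhoM a \<tau> = integral {0..\<tau>} (\<lambda>t. a t / sqrt ((a \<tau>)\<^sup>2 - (a t)\<^sup>2))"

definition t0 :: "(real \<Rightarrow> real) \<Rightarrow> real \<Rightarrow> real \<Rightarrow> real" where
  "t0 a \<tau> \<rho> = (THE s. -\<tau> < s \<and> s < \<tau> \<and>
       \<rho> = integral {s..\<tau>} (\<lambda>t. a t / sqrt ((a \<tau>)\<^sup>2 - (a t)\<^sup>2)))"

definition f_pos :: "(real \<Rightarrow> real) \<Rightarrow> real \<Rightarrow> real \<Rightarrow> real" where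
  "f_pos a \<tau> s = integral {s..\<tau>} (\<lambda>t. deriv (deriv a) t / (deriv a t)\<^sup>2 *
       (sqrt ((a \<tau>)\<^sup>2 - (a s)\<^sup>2) / sqrt ((a \<tau>)\<^sup>2 - (a t)\<^sup>2) - 1))"

definition f_fun :: "(real \<Rightarrow> real) \<Rightarrow> real \<Rightarrow> real \<Rightarrow> real" where
  "f_fun a \<tau> s = (if 0 \<le> s then f_pos a \<tau> s else 2 * f_pos a \<tau> 0 - f_pos a \<tau> (-s))"

definition g_tautau :: "(real \<Rightarrow> real) \<Rightarrow> real \<Rightarrow> real \<Rightarrow> real" where
  "g_tautau a \<tau> \<rho> = - (1 - deriv a \<tau> * f_fun a \<tau> (t0 a \<tau> \<rho>))\<^sup>2"

definition rho_max :: "(real \<Rightarrow> real) \<Rightarrow> real \<Rightarrow> real" where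
  "rho_max a \<tau> = (let S = {\<rho>. 0 < \<rho> \<and> \<rho> < 2 * rhoM a \<tau> \<and> g_tautau a \<tau> \<rho> = 0}
                   in if S \<noteq> {} then Inf S else 2 * rhoM a \<tau>)"

definition D_polar :: "(real \<Rightarrow> real) \<Rightarrow> real \<Rightarrow> real \<Rightarrow> (real \<times> real \<times> real \<times> real) set" where
  "D_polar a \<theta>0 \<phi>0 = {(\<tau>, \<rho>, \<theta>, \<phi>). 0 < \<tau> \<and> 0 < \<rho> \<and> \<rho> < rho_max a \<tau> \<and>
       \<theta>0 < \<theta> \<and> \<theta> < \<theta>0 + pi \<and> \<phi>0 < \<phi> \<and> \<phi> < \<phi>0 + 2 * pi}"

definition g_thth :: "(real \<Rightarrow> real) \<Rightarrow> real \<Rightarrow> real \<Rightarrow> real" where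
  "g_thth a \<tau> \<rho> = (let s = t0 a \<tau> \<rho> in
     if s \<noteq> 0 then (a s)\<^sup>2 * (chi a \<bar>s\<bar> \<tau>)\<^sup>2
     else Lim (at 0) (\<lambda>u. (a u)\<^sup>2 * (chi a \<bar>u\<bar> \<tau>)\<^sup>2))"

definition g_phph :: "(real \<Rightarrow> real) \<Rightarrow> real \<Rightarrow> real \<Rightarrow> real \<Rightarrow> real" where
  "g_phph a \<tau> \<rho> \<theta> = g_thth a \<tau> \<rho> * (sin \<theta>)\<^sup>2"

end

theory Submission
  imports Defs
begin

lemma integral_affine01:
  fixes g :: "real \<Rightarrow> real"
  assumes "q \<le> r" "continuous_on {q..r} g"
  shows "integral {q..r} g = (r - q) * integral {0..1} (\<lambda>v. g (q + (r - q) * v))"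
proof -
  have aux: "q + (r - q) * v \<le> r" if "0 \<le> v" "v \<le> 1" for v
    using mult_left_le[of v "r-q"] that assms(1) by simp
  have "((\<lambda>v. (r - q) *\<^sub>R g (q + (r - q) * v)) has_integral integral {q + (r-q)*0..q + (r-q)*1} g) {0..1}"
    by (rule has_integral_substitution[where c=q and d=r])
       (use assms aux in \<open>auto intro!: derivative_eq_intros\<close>)
  then have "((\<lambda>v. (r - q) * g (q + (r - q) * v)) has_integral integral {q..r} g) {0..1}" by simp
  then show ?thesis by (simp add: has_integral_iff)
qed

lemma param_cont:
  fixes g :: "real \<Rightarrow> real \<Rightarrow> real"
  assumes cg: "continuous_on S (\<lambda>z. g (fst z) (snd z))"
    and V: "\<And>p q r. (p,q,r) \<in> V \<Longrightarrow> q \<le> r"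
    and VS: "\<And>p q r t. (p,q,r) \<in> V \<Longrightarrow> q \<le> t \<Longrightarrow> t \<le> r \<Longrightarrow> (p,t) \<in> S"
  shows "continuous_on V (\<lambda>z. integral {fst (snd z)..snd (snd z)} (g (fst z)))"
proof -
  have cV: "continuous_on (V \<times> cbox 0 1)
      (\<lambda>(z, v). g (fst z) (fst (snd z) + (snd (snd z) - fst (snd z)) * v))"
  proof -
    have "continuous_on (V \<times> cbox 0 1) ((\<lambda>z. g (fst z) (snd z)) \<circ>
        (\<lambda>x. (fst (fst x), fst (snd (fst x)) + (snd (snd (fst x)) - fst (snd (fst x))) * snd x)))"
    proof (rule continuous_on_compose)
      show "continuous_on (V \<times> cbox 0 1)
         (\<lambda>x. (fst (fst x), fst (snd (fst x)) + (snd (snd (fst x)) - fst (snd (fst x))) * snd x))"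
        by (intro continuous_intros)
      have "(fst (fst x), fst (snd (fst x)) + (snd (snd (fst x)) - fst (snd (fst x))) * snd x) \<in> S"
        if "x \<in> V \<times> cbox 0 1" for x
      proof -
        obtain p q r v where x: "x = ((p,q,r),v)" by (metis prod.collapse)
        with that have pqr: "(p,q,r) \<in> V" and v: "0 \<le> v" "v \<le> 1" by auto
        from V[OF pqr] have "q \<le> r" .
        have "q \<le> q + (r - q) * v" using v \<open>q \<le> r\<close> by simp
        moreover have "q + (r - q) * v \<le> r" using v \<open>q \<le> r\<close> mult_left_le[of v "r-q"] by simp
        ultimately show ?thesis using VS[OF pqr] x by auto
      qed
      then show inS: "continuous_on ((\<lambda>x. (fst (fst x), fst (snd (fst x)) + (snd (snd (fst x)) - fst (snd (fst x))) * snd x)) ` (V \<times> cbox 0 1))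
          (\<lambda>z. g (fst z) (snd z))"
        by (intro continuous_on_subset[OF cg] image_subsetI) 
    qed
    then show ?thesis by (simp add: o_def case_prod_beta)
  qed
  have c1: "continuous_on V (\<lambda>z. integral (cbox 0 1) (\<lambda>v. g (fst z) (fst (snd z) + (snd (snd z) - fst (snd z)) * v)))"
    by (rule integral_continuous_on_param[OF cV])
  have c2: "continuous_on V (\<lambda>z. (snd (snd z) - fst (snd z)) * integral (cbox 0 1) (\<lambda>v. g (fst z) (fst (snd z) + (snd (snd z) - fst (snd z)) * v)))"
    by (intro continuous_intros c1)
  show ?thesis
  proof (rule continuous_on_eq[OF c2])
    fix z assume z: "z \<in> V"
    obtain p q r where zz: "z = (p,q,r)" by (metis prod.collapse)
    have qr: "q \<le> r" using V z zz by auto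
    have "continuous_on {q..r} (g p)"
    proof -
      have "continuous_on {q..r} (\<lambda>t. g (fst (p,t)) (snd (p,t)))"
        by (rule continuous_on_compose2[OF cg]) (use VS z zz in \<open>auto intro!: continuous_intros\<close>)
      then show ?thesis by simp
    qed
    from integral_affine01[OF qr this] show "(snd (snd z) - fst (snd z)) * integral (cbox 0 1) (\<lambda>v. g (fst z) (fst (snd z) + (snd (snd z) - fst (snd z)) * v)) =
         integral {fst (snd z)..snd (snd z)} (g (fst z))" using zz by simp
  qed
qed


locale sf =
  fixes a a1 a2 :: "real \<Rightarrow> real"
  assumes a0: "a 0 = 0"
    and even: "\<And>t. a (-t) = a t"
    and smono: "strict_mono_on {0..} a"
    and cont0: "continuous_on {0..} a"
    and d1: "\<And>t. t > 0 \<Longrightarrow> (a has_real_derivative a1 t) (at t)"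
    and d2: "\<And>t. t > 0 \<Longrightarrow> (a1 has_real_derivative a2 t) (at t)"
    and c2: "continuous_on {0<..} a2"
    and nz: "\<And>t. t > 0 \<Longrightarrow> a1 t \<noteq> 0"
begin

definition h :: "real \<Rightarrow> real \<Rightarrow> real" where
  "h \<tau> t = sqrt ((a \<tau>)\<^sup>2 - (a t)\<^sup>2)"

lemma a_abs: "a \<bar>t\<bar> = a t"
  by (cases "t \<ge> 0") (auto simp: even)

lemma a_lt: "\<bar>s\<bar> < \<bar>t\<bar> \<Longrightarrow> a s < a t"
  using smono a_abs unfolding strict_mono_on_def
  by (metis abs_ge_zero atLeast_iff)

lemma a_le: "\<bar>s\<bar> \<le> \<bar>t\<bar> \<Longrightarrow> a s \<le> a t"
  using a_lt a_abs by (metis order_le_less)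

lemma a_pos: "t \<noteq> 0 \<Longrightarrow> 0 < a t"
  using a_lt[of 0 t] a0 by simp

lemma a_nonneg: "0 \<le> a t"
  using a_le[of 0 t] a0 by simp

lemma a_sq_lt: "\<bar>t\<bar> < \<bar>\<tau>\<bar> \<Longrightarrow> (a t)\<^sup>2 < (a \<tau>)\<^sup>2"
  using a_lt a_nonneg by (simp add: power_strict_mono)

lemma a_sq_le: "\<bar>t\<bar> \<le> \<bar>\<tau>\<bar> \<Longrightarrow> (a t)\<^sup>2 \<le> (a \<tau>)\<^sup>2"
  using a_le a_nonneg by (simp add: power_mono)

lemma cont_a: "continuous_on UNIV a"
proof -
  have "continuous_on UNIV (\<lambda>t. a \<bar>t\<bar>)"
    by (rule continuous_on_compose2[OF cont0]) (auto intro!: continuous_intros)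
  then show ?thesis by (simp add: a_abs)
qed

lemma isCont_a: "isCont a x"
  using cont_a by (simp add: continuous_on_eq_continuous_at)

lemma cont_a1: "continuous_on {0<..} a1"
  by (rule DERIV_continuous_on[where D=a2]) (auto intro: has_field_derivative_at_within d2)

lemma cont_h: "continuous_on UNIV (\<lambda>z. h (fst z) (snd z))"
  unfolding h_def by (intro continuous_intros continuous_on_compose2[OF cont_a]) auto

lemma cont_h1: "continuous_on S (h \<tau>)"
proof -
  have "continuous_on S (\<lambda>x. h (fst (\<tau>,x)) (snd (\<tau>,x)))"
    by (rule continuous_on_compose2[OF cont_h]) (auto intro!: continuous_on_Pair continuous_on_const continuous_on_id)
  then show ?thesis by simp
qed

lemma h_pos: "\<bar>t\<bar> < \<bar>\<tau>\<bar> \<Longrightarrow> 0 < h \<tau> t"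
  unfolding h_def using a_sq_lt by simp

lemma h_nonneg: "\<bar>t\<bar> \<le> \<bar>\<tau>\<bar> \<Longrightarrow> 0 \<le> h \<tau> t"
  unfolding h_def using a_sq_le by simp

lemma h_self: "h \<tau> \<tau> = 0"
  by (simp add: h_def)

lemma ftc_kernel:
  assumes s: "0 < s" "s \<le> \<tau>"
    and dpsi: "\<And>x. x > 0 \<Longrightarrow> (\<psi> has_real_derivative \<psi>' x) (at x)"
    and cpsi': "continuous_on {0<..} \<psi>'"
  shows "((\<lambda>t. \<psi> t * a t * a1 t / h \<tau> t) has_integral
           (\<psi> s * h \<tau> s + integral {s..\<tau>} (\<lambda>x. \<psi>' x * h \<tau> x))) {s..\<tau>}"
proof -
  define P where "P t = - \<psi> t * h \<tau> t + integral {s..t} (\<lambda>x. \<psi>' x * h \<tau> x)" for t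
  have cpsi: "continuous_on {s..\<tau>} \<psi>"
    by (rule DERIV_continuous_on[where D=\<psi>']) (use s in \<open>auto intro!: has_field_derivative_at_within dpsi\<close>)
  have cgh: "continuous_on {s..\<tau>} (\<lambda>x. \<psi>' x * h \<tau> x)"
  proof (intro continuous_intros)
    show "continuous_on {s..\<tau>} \<psi>'" by (rule continuous_on_subset[OF cpsi']) (use s in auto)
    show "continuous_on {s..\<tau>} (h \<tau>)" by (rule cont_h1)
  qed
  have ch: "continuous_on {s..\<tau>} (h \<tau>)" by (rule cont_h1)
  have cP: "continuous_on {s..\<tau>} P"
    unfolding P_def
    by (intro continuous_intros cpsi ch indefinite_integral_continuous_1 integrable_continuous_real cgh)
  have dP: "(P has_vector_derivative (\<psi> x * a x * a1 x / h \<tau> x)) (at x)" if x: "x \<in> {s<..<\<tau>}" for x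
  proof -
    have x0: "x > 0" using x s by auto
    have hp: "0 < (a \<tau>)\<^sup>2 - (a x)\<^sup>2" using a_sq_lt[of x \<tau>] x s by auto
    have dh: "(h \<tau> has_real_derivative (inverse (sqrt ((a \<tau>)\<^sup>2 - (a x)\<^sup>2)) / 2) * (- (2 * a x * a1 x))) (at x)"
    proof -
      have dg: "((\<lambda>t. (a \<tau>)\<^sup>2 - (a t)\<^sup>2) has_real_derivative (- (2 * a x * a1 x))) (at x)"
        by (auto intro!: derivative_eq_intros d1 x0)
      from DERIV_chain2[OF DERIV_real_sqrt[OF hp] dg] show ?thesis unfolding h_def by simp
    qed
    have di: "((\<lambda>t. integral {s..t} (\<lambda>x. \<psi>' x * h \<tau> x)) has_real_derivative \<psi>' x * h \<tau> x) (at x)"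
    proof -
      have "((\<lambda>t. integral {s..t} (\<lambda>x. \<psi>' x * h \<tau> x)) has_real_derivative \<psi>' x * h \<tau> x) (at x within {s..\<tau>})"
        by (rule integral_has_real_derivative[OF cgh]) (use x in auto)
      moreover have "at x within {s..\<tau>} = at x"
        by (rule at_within_interior) (use x in auto)
      ultimately show ?thesis by simp
    qed
    have "(P has_real_derivative (- \<psi>' x * h \<tau> x + (- \<psi> x) * ((inverse (sqrt ((a \<tau>)\<^sup>2 - (a x)\<^sup>2)) / 2) * (- (2 * a x * a1 x))) + \<psi>' x * h \<tau> x)) (at x)"
      unfolding P_def
      by (rule derivative_eq_intros dpsi[OF x0] dh di refl)+ simp
    moreover have "(- \<psi>' x * h \<tau> x + (- \<psi> x) * ((inverse (sqrt ((a \<tau>)\<^sup>2 - (a x)\<^sup>2)) / 2) * (- (2 * a x * a1 x))) + \<psi>' x * h \<tau> x)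
        = \<psi> x * a x * a1 x / h \<tau> x"
      using hp by (simp add: h_def field_simps)
    ultimately show ?thesis by (simp add: has_real_derivative_iff_has_vector_derivative)
  qed
  have "((\<lambda>t. \<psi> t * a t * a1 t / h \<tau> t) has_integral (P \<tau> - P s)) {s..\<tau>}"
    by (rule fundamental_theorem_of_calculus_interior[OF s(2) cP dP])
  moreover have "P \<tau> - P s = \<psi> s * h \<tau> s + integral {s..\<tau>} (\<lambda>x. \<psi>' x * h \<tau> x)"
    by (simp add: P_def h_self)
  ultimately show ?thesis by simp
qed

end

context sf begin

definition psi0 :: "real \<Rightarrow> real" where "psi0 x = 1 / a1 x"
definition psi0' :: "real \<Rightarrow> real" where "psi0' x = - a2 x / (a1 x)\<^sup>2"
definition psi1 :: "real \<Rightarrow> real" where "psi1 x = 1 / ((a x)\<^sup>2 * a1 x)"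
definition psi1' :: "real \<Rightarrow> real" where
  "psi1' x = - (2 * a x * a1 x * a1 x + (a x)\<^sup>2 * a2 x) / ((a x)\<^sup>2 * a1 x)\<^sup>2"

lemma d_psi0: "x > 0 \<Longrightarrow> (psi0 has_real_derivative psi0' x) (at x)"
  unfolding psi0_def psi0'_def
  using nz[of x] by (auto intro!: derivative_eq_intros d2 simp: field_simps power2_eq_square)

lemma d_psi1: "x > 0 \<Longrightarrow> (psi1 has_real_derivative psi1' x) (at x)"
  unfolding psi1_def psi1'_def
  using nz[of x] a_pos[of x] by (auto intro!: derivative_eq_intros d1 d2 simp: field_simps power2_eq_square)

lemma c_psi0': "continuous_on {0<..} psi0'"
  unfolding psi0'_def using nz by (auto intro!: continuous_intros c2 cont_a1)

lemma ca_pos: "continuous_on S a"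
  by (rule continuous_on_subset[OF cont_a]) simp

lemma nz2: "x > 0 \<Longrightarrow> ((a x)\<^sup>2 * a1 x)\<^sup>2 \<noteq> 0"
  using nz[of x] a_pos[of x] by auto

lemma c_psi1': "continuous_on {0<..} psi1'"
  unfolding psi1'_def
  by (intro continuous_intros c2 cont_a1 ca_pos) (use nz2 in auto)

lemma c_psi0: "continuous_on {0<..} psi0"
  by (rule DERIV_continuous_on[where D=psi0']) (auto intro!: has_field_derivative_at_within d_psi0)

lemma c_psi1: "continuous_on {0<..} psi1"
  by (rule DERIV_continuous_on[where D=psi1']) (auto intro!: has_field_derivative_at_within d_psi1)

definition k :: "real \<Rightarrow> real \<Rightarrow> real" where
  "k \<tau> t = a t / sqrt ((a \<tau>)\<^sup>2 - (a t)\<^sup>2)"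

definition Iv :: "real \<Rightarrow> real \<Rightarrow> real" where
  "Iv \<tau> s = integral {s..\<tau>} (k \<tau>)"

lemma k_h: "k \<tau> t = a t / h \<tau> t" by (simp add: k_def h_def)

lemma k_even: "k \<tau> (-t) = k \<tau> t" by (simp add: k_def even)

lemma K0: assumes "0 < s" "s \<le> \<tau>"
  shows "(k \<tau> has_integral (psi0 s * h \<tau> s + integral {s..\<tau>} (\<lambda>x. psi0' x * h \<tau> x))) {s..\<tau>}"
proof -
  have int: "((\<lambda>t. psi0 t * a t * a1 t / h \<tau> t) has_integral (psi0 s * h \<tau> s + integral {s..\<tau>} (\<lambda>x. psi0' x * h \<tau> x))) {s..\<tau>}"
    by (rule ftc_kernel[OF assms d_psi0 c_psi0'])
  have eq: "psi0 t * a t * a1 t / h \<tau> t = k \<tau> t" if "t \<in> {s..\<tau>}" for t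
  proof -
    have "a1 t \<noteq> 0" using that assms nz by auto
    then show ?thesis by (simp add: psi0_def k_h)
  qed
  show ?thesis by (rule has_integral_eq[OF eq int])
qed

definition chiF :: "real \<Rightarrow> real \<Rightarrow> real" where
  "chiF \<tau> s = a \<tau> * (psi1 s * h \<tau> s + integral {s..\<tau>} (\<lambda>x. psi1' x * h \<tau> x))"

lemma K1: assumes "0 < s" "s \<le> \<tau>"
  shows "((\<lambda>t. 1 / a t * (a \<tau> / sqrt ((a \<tau>)\<^sup>2 - (a t)\<^sup>2))) has_integral chiF \<tau> s) {s..\<tau>}"
proof -
  have "((\<lambda>t. psi1 t * a t * a1 t / h \<tau> t) has_integral (psi1 s * h \<tau> s + integral {s..\<tau>} (\<lambda>x. psi1' x * h \<tau> x))) {s..\<tau>}"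
    by (rule ftc_kernel[OF assms d_psi1 c_psi1'])
  then have int: "((\<lambda>t. a \<tau> * (psi1 t * a t * a1 t / h \<tau> t)) has_integral chiF \<tau> s) {s..\<tau>}"
    unfolding chiF_def by (rule has_integral_mult_right)
  have eq: "a \<tau> * (psi1 t * a t * a1 t / h \<tau> t) = 1 / a t * (a \<tau> / sqrt ((a \<tau>)\<^sup>2 - (a t)\<^sup>2))"
    if "t \<in> {s..\<tau>}" for t
  proof -
    have t0: "t > 0" using that assms by auto
    have "a1 t \<noteq> 0" "a t \<noteq> 0" using nz[OF t0] a_pos[of t] t0 by auto
    then show ?thesis by (simp add: psi1_def h_def power2_eq_square)
  qed
  show ?thesis by (rule has_integral_eq[OF eq int])
qed

lemma chi_eq: "0 < s \<Longrightarrow> s \<le> \<tau> \<Longrightarrow> chi a s \<tau> = chiF \<tau> s"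
  unfolding chi_def using K1 by (simp add: integral_unique)

lemma chi_int: "0 < s \<Longrightarrow> s \<le> \<tau> \<Longrightarrow> (\<lambda>t. 1 / a t * (a \<tau> / sqrt ((a \<tau>)\<^sup>2 - (a t)\<^sup>2))) integrable_on {s..\<tau>}"
  using K1 by blast

lemma cont_upper:
  assumes cg: "continuous_on {0<..} g"
  shows "continuous_on {z. 0 < fst z \<and> fst z \<le> snd z} (\<lambda>z. integral {fst z..snd z} (\<lambda>x. g x * h (snd z) x))"
proof -
  have c1: "continuous_on (UNIV \<times> {0<..}) (\<lambda>z. g (snd z) * h (fst z) (snd z))"
    by (intro continuous_intros continuous_on_compose2[OF cg] continuous_on_subset[OF cont_h]) auto
  have "continuous_on {(p,q,r). 0 < q \<and> q \<le> r \<and> r = p}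
      (\<lambda>z. integral {fst (snd z)..snd (snd z)} ((\<lambda>p x. g x * h p x) (fst z)))"
    by (rule param_cont[OF c1]) auto
  then have "continuous_on {z. 0 < fst z \<and> fst z \<le> snd z}
      (\<lambda>z. integral {fst (snd (snd z, fst z, snd z))..snd (snd (snd z, fst z, snd z))} ((\<lambda>p x. g x * h p x) (fst (snd z, fst z, snd z))))"
    by (rule continuous_on_compose2) (auto intro!: continuous_intros)
  then show ?thesis by simp
qed

lemma cont_chiF: "continuous_on {z. 0 < fst z \<and> fst z \<le> snd z} (\<lambda>z. chiF (snd z) (fst z))"
proof -
  let ?W = "{z::real\<times>real. 0 < fst z \<and> fst z \<le> snd z}"
  have 1: "continuous_on ?W (\<lambda>z. a (snd z))"
    by (rule continuous_on_compose2[OF cont_a]) (auto intro!: continuous_intros)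
  have 2: "continuous_on ?W (\<lambda>z. psi1 (fst z))"
    by (rule continuous_on_compose2[OF c_psi1]) (auto intro!: continuous_intros)
  have 3: "continuous_on ?W (\<lambda>z. h (fst (snd z, fst z)) (snd (snd z, fst z)))"
    by (rule continuous_on_compose2[OF cont_h]) (auto intro!: continuous_intros)
  have 4: "continuous_on ?W (\<lambda>z. integral {fst z..snd z} (\<lambda>x. psi1' x * h (snd z) x))"
    by (rule cont_upper[OF c_psi1'])
  have "continuous_on ?W (\<lambda>z. a (snd z) * (psi1 (fst z) * h (fst (snd z, fst z)) (snd (snd z, fst z)) + integral {fst z..snd z} (\<lambda>x. psi1' x * h (snd z) x)))"
    by (intro continuous_intros 1 2 3 4)
  then show ?thesis by (simp add: chiF_def)
qed

end

context sf begin

lemma cont_k: "continuous_on {z. \<bar>snd z\<bar> < fst z} (\<lambda>z. k (fst z) (snd z))"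
proof -
  have "continuous_on {z. \<bar>snd z\<bar> < fst z} (\<lambda>z. a (snd z) / h (fst z) (snd z))"
  proof (intro continuous_on_divide)
    show "continuous_on {z. \<bar>snd z\<bar> < fst z} (\<lambda>z. a (snd z))"
      by (rule continuous_on_compose2[OF cont_a]) (auto intro!: continuous_intros)
    show "continuous_on {z. \<bar>snd z\<bar> < fst z} (\<lambda>z. h (fst z) (snd z))"
      by (rule continuous_on_subset[OF cont_h]) auto
    show "\<forall>z\<in>{z. \<bar>snd z\<bar> < fst z}. h (fst z) (snd z) \<noteq> 0"
    proof
      fix z :: "real \<times> real" assume "z \<in> {z. \<bar>snd z\<bar> < fst z}"
      then have "\<bar>snd z\<bar> < \<bar>fst z\<bar>" by auto
      then show "h (fst z) (snd z) \<noteq> 0" using h_pos[of "snd z" "fst z"] by simp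
    qed
  qed
  then show ?thesis by (simp add: k_h)
qed

lemma cont_k1: "\<bar>p\<bar> < \<tau> \<Longrightarrow> \<bar>q\<bar> < \<tau> \<Longrightarrow> continuous_on {p..q} (k \<tau>)"
proof -
  assume pq: "\<bar>p\<bar> < \<tau>" "\<bar>q\<bar> < \<tau>"
  have "continuous_on {p..q} (\<lambda>t. k (fst (\<tau>, t)) (snd (\<tau>, t)))"
    by (rule continuous_on_compose2[OF cont_k]) (use pq in \<open>auto intro!: continuous_intros\<close>)
  then show ?thesis by simp
qed

lemma k_nonneg: "\<bar>t\<bar> \<le> \<bar>\<tau>\<bar> \<Longrightarrow> 0 \<le> k \<tau> t"
  unfolding k_h using a_nonneg[of t] h_nonneg[of t \<tau>] by simp

lemma h_le: "h \<tau> t \<le> a \<tau>"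
  unfolding h_def using a_nonneg[of \<tau>]
proof -
  have "sqrt ((a \<tau>)\<^sup>2 - (a t)\<^sup>2) \<le> sqrt ((a \<tau>)\<^sup>2)" by (rule real_sqrt_le_mono) simp
  also have "\<dots> = a \<tau>" using a_nonneg[of \<tau>] by simp
  finally show "sqrt ((a \<tau>)\<^sup>2 - (a t)\<^sup>2) \<le> a \<tau>" .
qed

lemma k_lower: "\<bar>t\<bar> < \<tau> \<Longrightarrow> a t / a \<tau> \<le> k \<tau> t"
proof -
  assume t: "\<bar>t\<bar> < \<tau>"
  have hp: "0 < h \<tau> t" using h_pos[of t \<tau>] t by simp
  have ap: "0 < a \<tau>" using a_pos[of \<tau>] t by simp
  show ?thesis unfolding k_h
    by (rule divide_left_mono[OF h_le a_nonneg]) (use hp ap in simp)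
qed

lemma int_k: assumes "0 < \<tau>" "-\<tau> < s" "s < \<tau>" shows "k \<tau> integrable_on {s..\<tau>}"
proof -
  define c where "c = (max s 0 + \<tau>) / 2"
  have c: "0 < c" "s \<le> c" "c \<le> \<tau>" "\<bar>c\<bar> < \<tau>" using assms by (auto simp: c_def)
  have "\<bar>s\<bar> < \<tau>" using assms by auto
  then have i1: "k \<tau> integrable_on {s..c}"
    by (intro integrable_continuous_real cont_k1) (use c in auto)
  have i2: "k \<tau> integrable_on {c..\<tau>}" using K0[OF c(1) c(3)] by blast
  show ?thesis by (rule Henstock_Kurzweil_Integration.integrable_combine[OF c(2) c(3) i1 i2])
qed

lemma Iv_rep: "0 < s \<Longrightarrow> s \<le> \<tau> \<Longrightarrow> Iv \<tau> s = psi0 s * h \<tau> s + integral {s..\<tau>} (\<lambda>x. psi0' x * h \<tau> x)"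
  unfolding Iv_def using K0 by (simp add: integral_unique)

lemma Iv_split: assumes "0 < c" "c < \<tau>" "-\<tau> < s" "s \<le> c"
  shows "Iv \<tau> s = integral {s..c} (k \<tau>) + (psi0 c * h \<tau> c + integral {c..\<tau>} (\<lambda>x. psi0' x * h \<tau> x))"
proof -
  have "integral {s..c} (k \<tau>) + integral {c..\<tau>} (k \<tau>) = integral {s..\<tau>} (k \<tau>)"
    by (rule Henstock_Kurzweil_Integration.integral_combine) (use assms in \<open>auto intro!: int_k\<close>)
  then show ?thesis using Iv_rep[of c \<tau>] assms unfolding Iv_def by simp
qed

lemma Iv_self: "Iv \<tau> \<tau> = 0" by (simp add: Iv_def)

lemma Iv_cont: assumes "0 < \<tau>0" "-\<tau>0 < s0" "s0 < \<tau>0"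
  shows "isCont (\<lambda>z. Iv (fst z) (snd z)) (\<tau>0, s0)"
proof -
  define c where "c = (max s0 0 + \<tau>0) / 2"
  have c: "0 < c" "s0 < c" "c < \<tau>0" using assms by (auto simp: c_def)
  define N where "N = {z::real\<times>real. - fst z < snd z \<and> snd z < c \<and> c < fst z}"
  have oN: "open N" unfolding N_def
    by (intro open_Collect_conj open_Collect_less continuous_intros)
  have inN: "(\<tau>0, s0) \<in> N" using c assms by (auto simp: N_def)
  define F where "F z = integral {snd z..c} (k (fst z)) + (psi0 c * h (fst z) c + integral {c..fst z} (\<lambda>x. psi0' x * h (fst z) x))" for z
  have F1: "continuous_on N (\<lambda>z. integral {snd z..c} (k (fst z)))"
  proof -
    have "continuous_on {(p,q,r). r = c \<and> -p < q \<and> q < c \<and> c < p}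
        (\<lambda>z. integral {fst (snd z)..snd (snd z)} (k (fst z)))"
      by (rule param_cont[OF cont_k]) auto
    then have "continuous_on N (\<lambda>z. integral {fst (snd (fst z, snd z, c))..snd (snd (fst z, snd z, c))} (k (fst (fst z, snd z, c))))"
      by (rule continuous_on_compose2) (auto simp: N_def intro!: continuous_intros)
    then show ?thesis by simp
  qed
  have F2: "continuous_on N (\<lambda>z. integral {c..fst z} (\<lambda>x. psi0' x * h (fst z) x))"
  proof -
    have "continuous_on N (\<lambda>z. integral {fst (c, fst z)..snd (c, fst z)} (\<lambda>x. psi0' x * h (snd (c, fst z)) x))"
      by (rule continuous_on_compose2[OF cont_upper[OF c_psi0']]) (use c in \<open>auto simp: N_def intro!: continuous_intros\<close>)
    then show ?thesis by simp
  qed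
  have F3: "continuous_on N (\<lambda>z. h (fst z) c)"
  proof -
    have "continuous_on N (\<lambda>z. h (fst (fst z, c)) (snd (fst z, c)))"
      by (rule continuous_on_compose2[OF cont_h]) (auto intro!: continuous_intros)
    then show ?thesis by simp
  qed
  have cF: "continuous_on N F" unfolding F_def
    by (intro continuous_intros F1 F2 F3)
  have "continuous_on N (\<lambda>z. Iv (fst z) (snd z))"
  proof (rule continuous_on_eq[OF cF])
    fix z assume "z \<in> N"
    then show "F z = Iv (fst z) (snd z)" unfolding F_def N_def
      using Iv_split[of c "fst z" "snd z"] c by auto
  qed
  then show ?thesis using oN inN continuous_on_eq_continuous_at by blast
qed

lemma Iv_cont_right: assumes "0 < \<tau>" shows "continuous_on {\<tau>/2..\<tau>} (Iv \<tau>)"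
proof -
  have "continuous_on {\<tau>/2..\<tau>} (\<lambda>s. psi0 s * h \<tau> s + integral {s..\<tau>} (\<lambda>x. psi0' x * h \<tau> x))"
  proof (intro continuous_intros)
    show "continuous_on {\<tau>/2..\<tau>} psi0" by (rule continuous_on_subset[OF c_psi0]) (use assms in auto)
    show "continuous_on {\<tau>/2..\<tau>} (h \<tau>)" by (rule cont_h1)
    show "continuous_on {\<tau>/2..\<tau>} (\<lambda>s. integral {s..\<tau>} (\<lambda>x. psi0' x * h \<tau> x))"
      by (intro indefinite_integral_continuous_1' integrable_continuous_real continuous_intros
          continuous_on_subset[OF c_psi0'] cont_h1) (use assms in auto)
  qed
  then show ?thesis by (rule continuous_on_eq) (use assms Iv_rep in auto)
qed

end

context sf begin

lemma int_pos: assumes "0 < \<tau>" "-\<tau> < s1" "s1 < s2" "s2 < \<tau>"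
  shows "0 < integral {s1..s2} (k \<tau>)"
proof -
  obtain p q d where pq: "s1 \<le> p" "p < q" "q \<le> s2" "0 < d" and dd: "\<And>t. p \<le> t \<Longrightarrow> t \<le> q \<Longrightarrow> d \<le> \<bar>t\<bar>"
  proof (cases "s2 > 0")
    case True
    show ?thesis by (rule that[of "max s1 (s2/2)" s2 "max s1 (s2/2)"]) (use True assms in auto)
  next
    case False
    have "s1 < 0" using False assms by auto
    show ?thesis by (rule that[of s1 "min s2 (s1/2)" "- min s2 (s1/2)"]) (use False assms \<open>s1 < 0\<close> in auto)
  qed
  have ap: "0 < a \<tau>" using a_pos[of \<tau>] assms by simp
  have adp: "0 < a d" using a_pos[of d] pq by simp
  have ck: "continuous_on {s1..s2} (k \<tau>)" by (rule cont_k1) (use assms in auto)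
  have "0 < (q - p) * (a d / a \<tau>)" using pq ap adp by simp
  also have "(q - p) * (a d / a \<tau>) = integral {p..q} (\<lambda>_. a d / a \<tau>)" using pq by simp
  also have "\<dots> \<le> integral {p..q} (k \<tau>)"
  proof (rule integral_le)
    show "(\<lambda>_. a d / a \<tau>) integrable_on {p..q}" by (rule integrable_const_ivl)
    show "k \<tau> integrable_on {p..q}"
      by (rule integrable_continuous_real, rule continuous_on_subset[OF ck]) (use pq in auto)
    fix t assume t: "t \<in> {p..q}"
    then have t1: "\<bar>t\<bar> < \<tau>" using pq assms by auto
    have "a d \<le> a t" using dd[of t] t pq by (intro a_le) auto
    then have "a d / a \<tau> \<le> a t / a \<tau>" using ap by (simp add: divide_right_mono)
    also have "\<dots> \<le> k \<tau> t" by (rule k_lower[OF t1])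
    finally show "a d / a \<tau> \<le> k \<tau> t" .
  qed
  also have "\<dots> \<le> integral {s1..s2} (k \<tau>)"
  proof (rule integral_subset_le)
    show "{p..q} \<subseteq> {s1..s2}" using pq by auto
    show "k \<tau> integrable_on {p..q}"
      by (rule integrable_continuous_real, rule continuous_on_subset[OF ck]) (use pq in auto)
    show "k \<tau> integrable_on {s1..s2}" by (rule integrable_continuous_real[OF ck])
    show "\<forall>x\<in>{s1..s2}. 0 \<le> k \<tau> x" using assms by (auto intro!: k_nonneg)
  qed
  finally show ?thesis .
qed

lemma Iv_strict: assumes "0 < \<tau>" "-\<tau> < s1" "s1 < s2" "s2 < \<tau>"
  shows "Iv \<tau> s2 < Iv \<tau> s1"
proof -
  have "integral {s1..s2} (k \<tau>) + integral {s2..\<tau>} (k \<tau>) = integral {s1..\<tau>} (k \<tau>)"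
    by (rule Henstock_Kurzweil_Integration.integral_combine) (use assms in \<open>auto intro!: int_k\<close>)
  then show ?thesis using int_pos[OF assms] unfolding Iv_def by simp
qed

lemma Iv_sym: assumes "0 < \<tau>" "0 \<le> s" "s < \<tau>"
  shows "Iv \<tau> (-s) = 2 * Iv \<tau> 0 - Iv \<tau> s"
proof -
  have 1: "integral {-s..0} (k \<tau>) + integral {0..\<tau>} (k \<tau>) = integral {-s..\<tau>} (k \<tau>)"
    by (rule Henstock_Kurzweil_Integration.integral_combine) (use assms in \<open>auto intro!: int_k\<close>)
  have 2: "integral {0..s} (k \<tau>) + integral {s..\<tau>} (k \<tau>) = integral {0..\<tau>} (k \<tau>)"
    by (rule Henstock_Kurzweil_Integration.integral_combine) (use assms in \<open>auto intro!: int_k\<close>)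
  have "integral {-s..-0} (\<lambda>x. k \<tau> (-x)) = integral {0..s} (k \<tau>)"
    by (rule Henstock_Kurzweil_Integration.integral_reflect_real)
  then have 3: "integral {-s..0} (k \<tau>) = integral {0..s} (k \<tau>)" by (simp add: k_even)
  show ?thesis using 1 2 3 unfolding Iv_def by simp
qed

lemma Iv_isCont1: assumes "\<bar>x\<bar> < \<tau>" shows "isCont (Iv \<tau>) x"
proof -
  have "isCont (\<lambda>s. Iv (fst (\<tau>, s)) (snd (\<tau>, s))) x"
    by (rule continuous_at_compose[where f="\<lambda>s. (\<tau>, s)", unfolded o_def])
       (use Iv_cont[of \<tau> x] assms in \<open>auto intro!: continuous_intros\<close>)
  then show ?thesis by simp
qed

lemma surj_half: assumes "0 < \<tau>" "0 < \<rho>" "\<rho> \<le> Iv \<tau> 0"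
  shows "\<exists>s. 0 \<le> s \<and> s < \<tau> \<and> Iv \<tau> s = \<rho>"
proof -
  have c1: "continuous_on {0..\<tau>/2} (Iv \<tau>)"
    by (intro continuous_at_imp_continuous_on ballI Iv_isCont1) (use assms in auto)
  have c2: "continuous_on {\<tau>/2..\<tau>} (Iv \<tau>)" by (rule Iv_cont_right[OF assms(1)])
  have "continuous_on ({0..\<tau>/2} \<union> {\<tau>/2..\<tau>}) (Iv \<tau>)"
    by (rule continuous_on_closed_Un[OF closed_atLeastAtMost closed_atLeastAtMost c1 c2])
  moreover have "{0..\<tau>/2} \<union> {\<tau>/2..\<tau>} = {0..\<tau>}" using assms by auto
  ultimately have c: "continuous_on {0..\<tau>} (Iv \<tau>)" by simp
  obtain s where s: "0 \<le> s" "s \<le> \<tau>" "Iv \<tau> s = \<rho>"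
    using IVT2'[of "Iv \<tau>" \<tau> \<rho> 0, OF _ _ _ c] assms Iv_self by auto
  have "s \<noteq> \<tau>" using s Iv_self assms by auto
  then show ?thesis using s by auto
qed

lemma surj: assumes "0 < \<tau>" "0 < \<rho>" "\<rho> < 2 * Iv \<tau> 0"
  shows "\<exists>s. -\<tau> < s \<and> s < \<tau> \<and> Iv \<tau> s = \<rho>"
proof (cases "\<rho> \<le> Iv \<tau> 0")
  case True
  then show ?thesis using surj_half[OF assms(1,2) True] by force
next
  case False
  obtain s where s: "0 \<le> s" "s < \<tau>" "Iv \<tau> s = 2 * Iv \<tau> 0 - \<rho>"
    using surj_half[of \<tau> "2 * Iv \<tau> 0 - \<rho>"] assms False by auto
  have "Iv \<tau> (-s) = \<rho>" using Iv_sym[OF assms(1) s(1,2)] s(3) by simp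
  then show ?thesis using s assms by (intro exI[of _ "-s"]) auto
qed

lemma Iv_eq_int: "Iv \<tau> s = integral {s..\<tau>} (\<lambda>t. a t / sqrt ((a \<tau>)\<^sup>2 - (a t)\<^sup>2))"
  by (simp add: Iv_def k_def[abs_def])

lemma rhoM_Iv: "rhoM a \<tau> = Iv \<tau> 0"
  by (simp add: rhoM_def Iv_eq_int)

lemma t0_eq: assumes "0 < \<tau>" "-\<tau> < s" "s < \<tau>"
  shows "t0 a \<tau> (Iv \<tau> s) = s"
  unfolding t0_def
proof (rule the_equality)
  show "- \<tau> < s \<and> s < \<tau> \<and> Iv \<tau> s = integral {s..\<tau>} (\<lambda>t. a t / sqrt ((a \<tau>)\<^sup>2 - (a t)\<^sup>2))"
    using assms by (simp add: Iv_eq_int)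
  fix s' assume s': "- \<tau> < s' \<and> s' < \<tau> \<and> Iv \<tau> s = integral {s'..\<tau>} (\<lambda>t. a t / sqrt ((a \<tau>)\<^sup>2 - (a t)\<^sup>2))"
  then have e: "Iv \<tau> s = Iv \<tau> s'" by (simp add: Iv_eq_int)
  show "s' = s"
  proof (rule ccontr)
    assume "s' \<noteq> s"
    then consider "s' < s" | "s < s'" by linarith
    then show False
    proof cases
      case 1 then show False using Iv_strict[of \<tau> s' s] e s' assms by auto
    next
      case 2 then show False using Iv_strict[of \<tau> s s'] e s' assms by auto
    qed
  qed
qed

lemma t0_prop: assumes "0 < \<tau>" "0 < \<rho>" "\<rho> < 2 * Iv \<tau> 0"
  shows "-\<tau> < t0 a \<tau> \<rho> \<and> t0 a \<tau> \<rho> < \<tau> \<and> Iv \<tau> (t0 a \<tau> \<rho>) = \<rho>"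
proof -
  obtain s where s: "-\<tau> < s" "s < \<tau>" "Iv \<tau> s = \<rho>" using surj[OF assms] by blast
  then have "t0 a \<tau> \<rho> = s" using t0_eq[OF assms(1) s(1,2)] by simp
  then show ?thesis using s by simp
qed

end

context sf begin

lemma isCont_Iv_fixed: assumes "0 < \<tau>0" "\<bar>s\<bar> < \<tau>0"
  shows "isCont (\<lambda>z. Iv (fst z) s) (\<tau>0, \<rho>0)"
proof -
  have "isCont (\<lambda>z. Iv (fst (fst z, s)) (snd (fst z, s))) (\<tau>0, \<rho>0)"
    by (rule continuous_at_compose[where f="\<lambda>z. (fst z, s)", unfolded o_def])
       (use Iv_cont[of \<tau>0 s] assms in \<open>auto intro!: continuous_intros\<close>)
  then show ?thesis by simp
qed

lemma t0_cont: assumes "0 < \<tau>0" "0 < \<rho>0" "\<rho>0 < 2 * Iv \<tau>0 0"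
  shows "isCont (\<lambda>z. t0 a (fst z) (snd z)) (\<tau>0, \<rho>0)"
proof -
  define s0 where "s0 = t0 a \<tau>0 \<rho>0"
  have s0: "-\<tau>0 < s0" "s0 < \<tau>0" "Iv \<tau>0 s0 = \<rho>0" using t0_prop[OF assms] by (auto simp: s0_def)
  show ?thesis unfolding isCont_def
  proof (rule tendstoI)
    fix \<epsilon> :: real assume \<epsilon>: "0 < \<epsilon>"
    define e where "e = min (\<epsilon>/2) ((\<tau>0 - \<bar>s0\<bar>)/2)"
    have e: "0 < e" "e < \<epsilon>" using \<epsilon> s0 by (auto simp: e_def)
    define sL where "sL = s0 - e"
    define sR where "sR = s0 + e"
    have e2: "e \<le> (\<tau>0 - \<bar>s0\<bar>)/2" unfolding e_def by (rule min.cobounded2)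
    have ab: "s0 \<le> \<bar>s0\<bar>" "- s0 \<le> \<bar>s0\<bar>" by auto
    have "s0 - e < \<tau>0" using e e2 s0 ab by argo
    moreover have "- (s0 - e) < \<tau>0" using e e2 s0 ab by argo
    ultimately have sL1: "\<bar>sL\<bar> < \<tau>0" unfolding sL_def by (simp add: abs_less_iff)
    have "s0 + e < \<tau>0" using e e2 s0 ab by argo
    moreover have "- (s0 + e) < \<tau>0" using e e2 s0 ab by argo
    ultimately have sR1: "\<bar>sR\<bar> < \<tau>0" unfolding sR_def by (simp add: abs_less_iff)
    have sLR: "\<bar>sL\<bar> < \<tau>0" "\<bar>sR\<bar> < \<tau>0" "sL < sR"
      using sL1 sR1 e by (auto simp: sL_def sR_def)
    have hL: "\<rho>0 < Iv \<tau>0 sL"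
      using Iv_strict[of \<tau>0 sL s0] s0 e assms sLR by (auto simp: sL_def)
    have hR: "Iv \<tau>0 sR < \<rho>0"
      using Iv_strict[of \<tau>0 s0 sR] s0 e assms sLR by (auto simp: sR_def)
    have tsnd: "((\<lambda>z. snd z) \<longlongrightarrow> \<rho>0) (at (\<tau>0, \<rho>0))"
      using tendsto_snd[OF tendsto_ident_at[of "(\<tau>0, \<rho>0)" UNIV]] by simp
    have cF: "((\<lambda>z. fst z) \<longlongrightarrow> \<tau>0) (at (\<tau>0, \<rho>0))"
      using tendsto_fst[OF tendsto_ident_at[of "(\<tau>0, \<rho>0)" UNIV]] by simp
    have cL: "((\<lambda>z. Iv (fst z) sL - snd z) \<longlongrightarrow> Iv \<tau>0 sL - \<rho>0) (at (\<tau>0, \<rho>0))"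
      using isCont_Iv_fixed[OF assms(1) sLR(1), of \<rho>0] unfolding isCont_def
      by (auto intro!: tendsto_intros tsnd)
    have cR: "((\<lambda>z. snd z - Iv (fst z) sR) \<longlongrightarrow> \<rho>0 - Iv \<tau>0 sR) (at (\<tau>0, \<rho>0))"
      using isCont_Iv_fixed[OF assms(1) sLR(2), of \<rho>0] unfolding isCont_def
      by (auto intro!: tendsto_intros tsnd)
    have ev1: "eventually (\<lambda>z. 0 < Iv (fst z) sL - snd z) (at (\<tau>0, \<rho>0))"
      by (rule order_tendstoD(1)[OF cL]) (use hL in simp)
    have ev2: "eventually (\<lambda>z. 0 < snd z - Iv (fst z) sR) (at (\<tau>0, \<rho>0))"
      by (rule order_tendstoD(1)[OF cR]) (use hR in simp)
    have ev3: "eventually (\<lambda>z. max \<bar>sL\<bar> \<bar>sR\<bar> < fst z) (at (\<tau>0, \<rho>0))"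
      by (rule order_tendstoD(1)[OF cF]) (use sLR in simp)
    show "eventually (\<lambda>z. dist (t0 a (fst z) (snd z)) (t0 a (fst (\<tau>0, \<rho>0)) (snd (\<tau>0, \<rho>0))) < \<epsilon>) (at (\<tau>0, \<rho>0))"
      using ev1 ev2 ev3
    proof eventually_elim
      case (elim z)
      define \<tau> where "\<tau> = fst z"
      define \<rho> where "\<rho> = snd z"
      have tau: "\<bar>sL\<bar> < \<tau>" "\<bar>sR\<bar> < \<tau>" using elim by (auto simp: \<tau>_def)
      have "\<forall>x. sL \<le> x \<and> x \<le> sR \<longrightarrow> isCont (Iv \<tau>) x"
        using tau by (auto intro!: Iv_isCont1)
      then obtain s where s: "sL \<le> s" "s \<le> sR" "Iv \<tau> s = \<rho>"
        using IVT2[of "Iv \<tau>" sR \<rho> sL] elim sLR by (auto simp: \<tau>_def \<rho>_def)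
      have s1: "-\<tau> < s" "s < \<tau>" using s tau by auto
      have "t0 a \<tau> \<rho> = s" using t0_eq[of \<tau> s] s1 s(3) tau by auto
      moreover have "dist s s0 < \<epsilon>" using s e by (auto simp: sL_def sR_def dist_real_def)
      ultimately show ?case by (simp add: \<tau>_def \<rho>_def s0_def)
    qed
  qed
qed

end

context sf begin

definition E :: "real \<Rightarrow> real \<Rightarrow> real" where
  "E c u = a u * integral {u..c} (\<lambda>t. 1 / a t)"

lemma inva_cont: "0 < p \<Longrightarrow> continuous_on {p..q} (\<lambda>t. 1 / a t)"
proof (intro continuous_intros ca_pos ballI)
  fix x assume "0 < p" "x \<in> {p..q}"
  then have "0 < a x" using a_pos[of x] by simp
  then show "a x \<noteq> 0" by simp
qed

lemma inva_int: "0 < p \<Longrightarrow> (\<lambda>t. 1 / a t) integrable_on {p..q}"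
  by (rule integrable_continuous_real[OF inva_cont])

lemma E_nonneg: "0 < u \<Longrightarrow> 0 \<le> E c u"
proof -
  assume u: "0 < u"
  have "0 \<le> integral {u..c} (\<lambda>t. 1 / a t)"
    by (rule integral_nonneg[OF inva_int[OF u]]) (simp add: a_nonneg)
  then show ?thesis unfolding E_def using a_nonneg[of u] by simp
qed

lemma inva_int_le: assumes "0 < p" "p \<le> q" shows "integral {p..q} (\<lambda>t. 1 / a t) \<le> (q - p) * (1 / a p)"
proof -
  have "integral {p..q} (\<lambda>t. 1 / a t) \<le> integral {p..q} (\<lambda>_. 1 / a p)"
  proof (rule integral_le[OF inva_int[OF assms(1)] integrable_const_ivl])
    fix t assume t: "t \<in> {p..q}"
    have "a p \<le> a t" using t assms by (intro a_le) auto
    moreover have "0 < a p" using a_pos[of p] assms by simp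
    ultimately show "1 / a t \<le> 1 / a p" by (simp add: frac_le)
  qed
  also have "\<dots> = (q - p) * (1 / a p)" using assms by simp
  finally show ?thesis .
qed

lemma E_small: assumes c: "0 < c" and \<epsilon>: "0 < \<epsilon>"
  shows "\<exists>\<delta>>0. \<forall>u. 0 < u \<and> u < \<delta> \<longrightarrow> E c u < \<epsilon>"
proof -
  define d where "d = min (\<epsilon>/2) (c/2)"
  have d: "0 < d" "d \<le> \<epsilon>/2" "d < c" using c \<epsilon> by (auto simp: d_def)
  have ad: "0 < a d" using a_pos[of d] d by simp
  define \<eta> where "\<eta> = \<epsilon> * a d / (2 * c)"
  have \<eta>: "0 < \<eta>" using \<epsilon> ad c by (simp add: \<eta>_def)
  obtain \<delta>1 where \<delta>1: "0 < \<delta>1" "\<And>u. dist u 0 < \<delta>1 \<Longrightarrow> dist (a u) (a 0) < \<eta>"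
    using isCont_a[of 0] \<eta> unfolding continuous_at_eps_delta by blast
  show ?thesis
  proof (intro exI[of _ "min \<delta>1 d"] conjI allI impI)
    show "0 < min \<delta>1 d" using \<delta>1 d by simp
    fix u assume u: "0 < u \<and> u < min \<delta>1 d"
    have au: "a u < \<eta>" using \<delta>1(2)[of u] u a_nonneg[of u] by (simp add: a0 dist_real_def)
    have aup: "0 < a u" using a_pos[of u] u by simp
    have split: "integral {u..d} (\<lambda>t. 1 / a t) + integral {d..c} (\<lambda>t. 1 / a t) = integral {u..c} (\<lambda>t. 1 / a t)"
      by (rule Henstock_Kurzweil_Integration.integral_combine) (use u d in \<open>auto intro!: inva_int\<close>)
    have i1: "integral {u..d} (\<lambda>t. 1 / a t) \<le> (d - u) * (1 / a u)"
      by (rule inva_int_le) (use u d in auto)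
    have i2: "integral {d..c} (\<lambda>t. 1 / a t) \<le> (c - d) * (1 / a d)"
      by (rule inva_int_le) (use d in auto)
    have "E c u = a u * integral {u..d} (\<lambda>t. 1 / a t) + a u * integral {d..c} (\<lambda>t. 1 / a t)"
      unfolding E_def using split[symmetric] by (simp only: distrib_left)
    also have "a u * integral {u..d} (\<lambda>t. 1 / a t) \<le> a u * ((d - u) * (1 / a u))"
      by (rule mult_left_mono[OF i1]) (use aup in simp)
    also have "a u * ((d - u) * (1 / a u)) = d - u" using aup by simp
    also have "a u * integral {d..c} (\<lambda>t. 1 / a t) \<le> a u * ((c - d) * (1 / a d))"
      by (rule mult_left_mono[OF i2]) (use aup in simp)
    also have "a u * ((c - d) * (1 / a d)) \<le> \<eta> * ((c - d) * (1 / a d))"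
      using au d ad by (intro mult_right_mono) auto
    also have "\<eta> * ((c - d) * (1 / a d)) \<le> \<eta> * (c * (1 / a d))"
      using \<eta> d ad by (intro mult_left_mono mult_right_mono) auto
    also have "\<eta> * (c * (1 / a d)) = \<epsilon> / 2" using c ad by (simp add: \<eta>_def)
    finally show "E c u < \<epsilon>" using d u by linarith
  qed
qed

definition Eh :: "real \<Rightarrow> real \<Rightarrow> real" where
  "Eh c u = (if u = 0 then 0 else E c \<bar>u\<bar>)"

lemma Eh_cont: assumes "0 < c" shows "isCont (Eh c) 0"
  unfolding continuous_at_eps_delta
proof (intro allI impI)
  fix \<epsilon> :: real assume \<epsilon>: "0 < \<epsilon>"
  obtain \<delta> where \<delta>: "0 < \<delta>" "\<And>u. 0 < u \<and> u < \<delta> \<Longrightarrow> E c u < \<epsilon>" using E_small[OF assms \<epsilon>] by blast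
  show "\<exists>\<delta>>0. \<forall>x'. dist x' 0 < \<delta> \<longrightarrow> dist (Eh c x') (Eh c 0) < \<epsilon>"
  proof (intro exI[of _ \<delta>] conjI allI impI)
    show "0 < \<delta>" by (rule \<delta>(1))
    fix x' :: real assume x': "dist x' 0 < \<delta>"
    show "dist (Eh c x') (Eh c 0) < \<epsilon>"
    proof (cases "x' = 0")
      case True then show ?thesis using \<epsilon> by (simp add: Eh_def)
    next
      case False
      then have "0 < \<bar>x'\<bar>" "\<bar>x'\<bar> < \<delta>" using x' by auto
      then have "E c \<bar>x'\<bar> < \<epsilon>" "0 \<le> E c \<bar>x'\<bar>" using \<delta>(2) E_nonneg by auto
      then show ?thesis using False by (simp add: Eh_def dist_real_def)
    qed
  qed
qed

end

context sf begin

definition fch :: "real \<Rightarrow> real \<Rightarrow> real" where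
  "fch \<tau> t = 1 / a t * (a \<tau> / sqrt ((a \<tau>)\<^sup>2 - (a t)\<^sup>2))"

lemma chi_fch: "chi a u \<tau> = integral {u..\<tau>} (fch \<tau>)"
  by (simp add: chi_def fch_def[abs_def])

lemma fch_int: "0 < u \<Longrightarrow> u \<le> \<tau> \<Longrightarrow> fch \<tau> integrable_on {u..\<tau>}"
  using chi_int[of u \<tau>] by (simp add: fch_def[abs_def])

lemma fch_has: "0 < u \<Longrightarrow> u \<le> \<tau> \<Longrightarrow> (fch \<tau> has_integral chiF \<tau> u) {u..\<tau>}"
  using K1[of u \<tau>] by (simp add: fch_def[abs_def])

lemma fch_nonneg: "\<bar>t\<bar> \<le> \<bar>\<tau>\<bar> \<Longrightarrow> 0 \<le> fch \<tau> t"
proof -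
  assume t: "\<bar>t\<bar> \<le> \<bar>\<tau>\<bar>"
  have "0 \<le> sqrt ((a \<tau>)\<^sup>2 - (a t)\<^sup>2)" using a_sq_le[OF t] by simp
  then show ?thesis unfolding fch_def using a_nonneg[of t] a_nonneg[of \<tau>] by simp
qed

lemma chi_bound: assumes u: "0 < u" "u \<le> c" and c: "c < \<tau>"
  shows "0 \<le> chi a u \<tau> \<and> a u * chi a u \<tau> \<le> (a \<tau> / h \<tau> c) * E c u + a u * chiF \<tau> c"
proof -
  have c0: "0 < c" using u by simp
  have split: "integral {u..c} (fch \<tau>) + integral {c..\<tau>} (fch \<tau>) = integral {u..\<tau>} (fch \<tau>)"
    by (rule Henstock_Kurzweil_Integration.integral_combine) (use u c in \<open>auto intro!: fch_int\<close>)
  have i2: "integral {c..\<tau>} (fch \<tau>) = chiF \<tau> c" using fch_has[of c \<tau>] c c0 by (simp add: integral_unique)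
  have hc: "0 < h \<tau> c" using h_pos[of c \<tau>] c c0 by simp
  define M where "M = a \<tau> / h \<tau> c"
  have M0: "0 \<le> M" using hc a_nonneg[of \<tau>] by (simp add: M_def)
  have int1: "fch \<tau> integrable_on {u..c}"
    by (rule integrable_subinterval_real[OF fch_int[of u \<tau>]]) (use u c in auto)
  have P1: "integral {u..c} (fch \<tau>) \<le> M * integral {u..c} (\<lambda>t. 1 / a t)"
  proof -
    have "integral {u..c} (fch \<tau>) \<le> integral {u..c} (\<lambda>t. M * (1 / a t))"
    proof (rule integral_le[OF int1])
      show "(\<lambda>t. M * (1 / a t)) integrable_on {u..c}"
        by (rule integrable_on_mult_right[OF inva_int]) (use u in simp)
      fix t assume t: "t \<in> {u..c}"
      have t0: "0 < t" using t u by simp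
      have at: "0 < a t" using a_pos[of t] t0 by simp
      have "(a t)\<^sup>2 \<le> (a c)\<^sup>2" using a_sq_le[of t c] t t0 by simp
      then have hle: "h \<tau> c \<le> h \<tau> t" unfolding h_def by simp
      have "a \<tau> / sqrt ((a \<tau>)\<^sup>2 - (a t)\<^sup>2) \<le> M"
        unfolding M_def h_def[symmetric]
        by (rule divide_left_mono[OF hle a_nonneg]) (use hc hle in simp)
      then have "1 / a t * (a \<tau> / sqrt ((a \<tau>)\<^sup>2 - (a t)\<^sup>2)) \<le> 1 / a t * M"
        by (rule mult_left_mono) (use at in simp)
      then show "fch \<tau> t \<le> M * (1 / a t)" unfolding fch_def mult.commute[of M] .
    qed
    also have "\<dots> = M * integral {u..c} (\<lambda>t. 1 / a t)" by (rule integral_mult_right)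
    finally show ?thesis .
  qed
  have nn1: "0 \<le> integral {u..c} (fch \<tau>)"
    by (rule integral_nonneg[OF int1]) (use u c in \<open>auto intro!: fch_nonneg\<close>)
  have nn2: "0 \<le> integral {c..\<tau>} (fch \<tau>)"
    by (rule integral_nonneg[OF fch_int]) (use c0 c in \<open>auto intro!: fch_nonneg\<close>)
  have chi: "chi a u \<tau> = integral {u..c} (fch \<tau>) + chiF \<tau> c" using split i2 by (simp add: chi_fch)
  have "a u * chi a u \<tau> = a u * integral {u..c} (fch \<tau>) + a u * chiF \<tau> c" by (simp add: chi distrib_left)
  also have "a u * integral {u..c} (fch \<tau>) \<le> a u * (M * integral {u..c} (\<lambda>t. 1 / a t))"
    by (rule mult_left_mono[OF P1 a_nonneg])
  also have "a u * (M * integral {u..c} (\<lambda>t. 1 / a t)) = M * E c u" by (simp add: E_def)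
  finally have "a u * chi a u \<tau> \<le> M * E c u + a u * chiF \<tau> c" by simp
  moreover have "0 \<le> chi a u \<tau>" using chi nn1 nn2 i2 by simp
  ultimately show ?thesis by (simp add: M_def)
qed

end

context sf begin

definition Gt :: "real \<times> real \<Rightarrow> real" where
  "Gt z = (if snd z = 0 then 0 else (a (snd z))\<^sup>2 * (chi a \<bar>snd z\<bar> (fst z))\<^sup>2)"

lemma Gt_cont_nz: assumes "0 < \<tau>0" "s0 \<noteq> 0" "\<bar>s0\<bar> < \<tau>0"
  shows "isCont Gt (\<tau>0, s0)"
proof -
  define N where "N = {z::real\<times>real. 0 < \<bar>snd z\<bar> \<and> \<bar>snd z\<bar> < fst z}"
  have oN: "open N" unfolding N_def
    by (intro open_Collect_conj open_Collect_less continuous_intros)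
  have inN: "(\<tau>0, s0) \<in> N" using assms by (auto simp: N_def)
  have c1: "continuous_on N (\<lambda>z. chiF (snd (\<bar>snd z\<bar>, fst z)) (fst (\<bar>snd z\<bar>, fst z)))"
    by (rule continuous_on_compose2[OF cont_chiF]) (auto simp: N_def intro!: continuous_intros)
  have c2: "continuous_on N (\<lambda>z. a (snd z))"
    by (rule continuous_on_compose2[OF cont_a]) (auto intro!: continuous_intros)
  have c3: "continuous_on N (\<lambda>z. (a (snd z))\<^sup>2 * (chiF (snd (\<bar>snd z\<bar>, fst z)) (fst (\<bar>snd z\<bar>, fst z)))\<^sup>2)"
    by (intro continuous_intros c1 c2)
  have "continuous_on N Gt"
  proof (rule continuous_on_eq[OF c3])
    fix z assume "z \<in> N"
    then have z: "0 < \<bar>snd z\<bar>" "\<bar>snd z\<bar> \<le> fst z" "snd z \<noteq> 0" by (auto simp: N_def)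
    show "(a (snd z))\<^sup>2 * (chiF (snd (\<bar>snd z\<bar>, fst z)) (fst (\<bar>snd z\<bar>, fst z)))\<^sup>2 = Gt z"
      using chi_eq[OF z(1,2)] z(3) by (simp add: Gt_def)
  qed
  then show ?thesis using oN inN continuous_on_eq_continuous_at by blast
qed

lemma Gt_cont0: assumes "0 < \<tau>0" shows "isCont Gt (\<tau>0, 0)"
proof -
  define c where "c = \<tau>0 / 2"
  have c: "0 < c" "c < \<tau>0" using assms by (auto simp: c_def)
  let ?F = "at (\<tau>0, 0::real)"
  have tfst: "((\<lambda>z. fst z) \<longlongrightarrow> \<tau>0) ?F"
    using tendsto_fst[OF tendsto_ident_at[of "(\<tau>0, 0::real)" UNIV]] by simp
  have tsnd: "((\<lambda>z. snd z) \<longlongrightarrow> 0) ?F"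
    using tendsto_snd[OF tendsto_ident_at[of "(\<tau>0, 0::real)" UNIV]] by simp
  have ta: "((\<lambda>z. a (fst z)) \<longlongrightarrow> a \<tau>0) ?F" by (rule isCont_tendsto_compose[OF isCont_a tfst])
  have ta2: "((\<lambda>z. a (snd z)) \<longlongrightarrow> 0) ?F" using isCont_tendsto_compose[OF isCont_a tsnd] by (simp add: a0)
  have th: "((\<lambda>z. h (fst z) c) \<longlongrightarrow> h \<tau>0 c) ?F"
  proof -
    have ic: "isCont (\<lambda>z. h (fst z) (snd z)) (\<tau>0, c)"
      using cont_h continuous_on_eq_continuous_at[of UNIV] by blast
    have "((\<lambda>z. (fst z, c)) \<longlongrightarrow> (\<tau>0, c)) ?F" by (intro tendsto_Pair tfst tendsto_const)
    from isCont_tendsto_compose[OF ic this] show ?thesis by simp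
  qed
  have hc: "h \<tau>0 c \<noteq> 0" using h_pos[of c \<tau>0] c by simp
  have tE: "((\<lambda>z. Eh c (snd z)) \<longlongrightarrow> 0) ?F"
    using isCont_tendsto_compose[OF Eh_cont[OF c(1)] tsnd] by (simp add: Eh_def)
  have tC: "((\<lambda>z. chiF (fst z) c) \<longlongrightarrow> chiF \<tau>0 c) ?F"
  proof -
    define Oo where "Oo = {z::real\<times>real. 0 < fst z \<and> fst z < snd z}"
    have oOo: "open Oo" unfolding Oo_def by (intro open_Collect_conj open_Collect_less continuous_intros)
    have "continuous_on Oo (\<lambda>z. chiF (snd z) (fst z))"
      by (rule continuous_on_subset[OF cont_chiF]) (auto simp: Oo_def)
    then have ic: "isCont (\<lambda>z. chiF (snd z) (fst z)) (c, \<tau>0)"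
      using oOo c continuous_on_eq_continuous_at[OF oOo] by (auto simp: Oo_def)
    have "((\<lambda>z. (c, fst z)) \<longlongrightarrow> (c, \<tau>0)) ?F" by (intro tendsto_Pair tfst tendsto_const)
    from isCont_tendsto_compose[OF ic this] show ?thesis by simp
  qed
  define B where "B z = (a (fst z) / h (fst z) c * Eh c (snd z) + a (snd z) * chiF (fst z) c)\<^sup>2" for z
  have tB: "(B \<longlongrightarrow> 0) ?F"
  proof -
    have "(B \<longlongrightarrow> (a \<tau>0 / h \<tau>0 c * 0 + 0 * chiF \<tau>0 c)\<^sup>2) ?F"
      unfolding B_def
      by (rule tendsto_power[OF tendsto_add[OF tendsto_mult[OF tendsto_divide[OF ta th hc] tE] tendsto_mult[OF ta2 tC]]])
    then show ?thesis by simp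
  qed
  have ev1: "eventually (\<lambda>z. c < fst z) ?F" by (rule order_tendstoD(1)[OF tfst c(2)])
  have ev2: "eventually (\<lambda>z. snd z < c) ?F" by (rule order_tendstoD(2)[OF tsnd c(1)])
  have ev3: "eventually (\<lambda>z. -c < snd z) ?F" by (rule order_tendstoD(1)[OF tsnd]) (use c in simp)
  have le: "eventually (\<lambda>z. Gt z \<le> B z) ?F"
    using ev1 ev2 ev3
  proof eventually_elim
    case (elim z)
    show ?case
    proof (cases "snd z = 0")
      case True
      then have "Gt z = 0" by (simp add: Gt_def)
      then show ?thesis unfolding B_def by simp
    next
      case False
      define u where "u = \<bar>snd z\<bar>"
      have u: "0 < u" "u \<le> c" using False elim by (auto simp: u_def)
      have cb: "0 \<le> chi a u (fst z) \<and> a u * chi a u (fst z) \<le> (a (fst z) / h (fst z) c) * E c u + a u * chiF (fst z) c"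
        by (rule chi_bound[OF u elim(1)])
      have au: "a (snd z) = a u" by (simp add: u_def a_abs)
      have Eh: "Eh c (snd z) = E c u" using False by (simp add: Eh_def u_def)
      have nn: "0 \<le> a u * chi a u (fst z)" using cb a_nonneg[of u] by simp
      have "Gt z = (a u * chi a u (fst z))\<^sup>2" using False by (simp add: Gt_def au u_def power_mult_distrib)
      also have "\<dots> \<le> ((a (fst z) / h (fst z) c) * E c u + a u * chiF (fst z) c)\<^sup>2"
        by (rule power_mono) (use cb nn in auto)
      also have "\<dots> = B z" by (simp add: B_def Eh au)
      finally show ?thesis .
    qed
  qed
  have ge: "eventually (\<lambda>z. 0 \<le> Gt z) ?F" by (rule always_eventually) (simp add: Gt_def)
  have "(Gt \<longlongrightarrow> 0) ?F" by (rule tendsto_sandwich[OF ge le tendsto_const tB])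
  then show ?thesis unfolding isCont_def by (simp add: Gt_def)
qed

lemma Gt_cont: assumes "0 < \<tau>0" "\<bar>s0\<bar> < \<tau>0" shows "isCont Gt (\<tau>0, s0)"
proof (cases "s0 = 0")
  case True then show ?thesis using Gt_cont0[OF assms(1)] by simp
next
  case False then show ?thesis by (rule Gt_cont_nz[OF assms(1) _ assms(2)])
qed

lemma Gt_lim: assumes "0 < \<tau>" shows "((\<lambda>u. (a u)\<^sup>2 * (chi a \<bar>u\<bar> \<tau>)\<^sup>2) \<longlongrightarrow> 0) (at 0)"
proof -
  have ic: "isCont (\<lambda>u. Gt (\<tau>, u)) 0"
    by (rule continuous_at_compose[where f="\<lambda>u. (\<tau>, u)" and g=Gt, unfolded o_def])
       (use Gt_cont0[OF assms] in \<open>auto intro!: continuous_intros\<close>)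
  then have t: "((\<lambda>u. Gt (\<tau>, u)) \<longlongrightarrow> 0) (at 0)" unfolding isCont_def by (simp add: Gt_def)
  have ev: "eventually (\<lambda>u. Gt (\<tau>, u) = (a u)\<^sup>2 * (chi a \<bar>u\<bar> \<tau>)\<^sup>2) (at (0::real))"
    unfolding eventually_at
  proof (rule exI[of _ 1], intro conjI ballI impI)
    fix x :: real assume "x \<noteq> 0 \<and> dist x 0 < 1"
    then show "Gt (\<tau>, x) = (a x)\<^sup>2 * (chi a \<bar>x\<bar> \<tau>)\<^sup>2" by (simp add: Gt_def)
  qed simp
  show ?thesis using tendsto_cong[OF ev] t by simp
qed

lemma g_thth_Gt: assumes "0 < \<tau>" shows "g_thth a \<tau> \<rho> = Gt (\<tau>, t0 a \<tau> \<rho>)"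
proof -
  have L: "Lim (at 0) (\<lambda>u. (a u)\<^sup>2 * (chi a \<bar>u\<bar> \<tau>)\<^sup>2) = 0"
    by (rule tendsto_Lim[OF trivial_limit_at Gt_lim[OF assms]])
  show ?thesis
  proof (cases "t0 a \<tau> \<rho> = 0")
    case True
    then show ?thesis unfolding g_thth_def Let_def Gt_def using L by simp
  next
    case False
    then show ?thesis unfolding g_thth_def Let_def Gt_def by simp
  qed
qed

end

lemma rho_max_le: "rho_max a \<tau> \<le> 2 * rhoM a \<tau>"
proof -
  define S where "S = {\<rho>. 0 < \<rho> \<and> \<rho> < 2 * rhoM a \<tau> \<and> g_tautau a \<tau> \<rho> = 0}"
  show ?thesis
  proof (cases "S = {}")
    case True then show ?thesis unfolding rho_max_def Let_def S_def[symmetric] by simp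
  next
    case False
    then obtain x where x: "x \<in> S" by blast
    have bdd: "bdd_below S" unfolding S_def by (rule bdd_belowI[of _ 0]) auto
    have "Inf S \<le> x" by (rule cInf_lower[OF x bdd])
    also have "x < 2 * rhoM a \<tau>" using x by (simp add: S_def)
    finally show ?thesis using False unfolding rho_max_def Let_def S_def[symmetric] by simp
  qed
qed

context sf begin

lemma main_cont:
  "continuous_on (D_polar a \<theta>0 \<phi>0) (\<lambda>x. g_thth a (fst x) (fst (snd x)))"
proof -
  define F where "F x = Gt (fst x, t0 a (fst x) (fst (snd x)))" for x :: "real \<times> real \<times> real \<times> real"
  have "isCont F x" if x: "x \<in> D_polar a \<theta>0 \<phi>0" for x
  proof -
    obtain \<tau> \<rho> \<theta> \<phi> where xx: "x = (\<tau>, \<rho>, \<theta>, \<phi>)" by (metis prod.collapse)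
    have tr: "0 < \<tau>" "0 < \<rho>" "\<rho> < rho_max a \<tau>" using x xx by (auto simp: D_polar_def)
    have r2: "\<rho> < 2 * Iv \<tau> 0" using tr rho_max_le[of a \<tau>] by (simp add: rhoM_Iv)
    have tp: "-\<tau> < t0 a \<tau> \<rho> \<and> t0 a \<tau> \<rho> < \<tau> \<and> Iv \<tau> (t0 a \<tau> \<rho>) = \<rho>" by (rule t0_prop[OF tr(1,2) r2])
    have "isCont ((\<lambda>z. t0 a (fst z) (snd z)) \<circ> (\<lambda>x. (fst x, fst (snd x)))) x"
      by (rule continuous_at_compose) (use t0_cont[OF tr(1,2) r2] xx in \<open>auto intro!: continuous_intros\<close>)
    then have ic1: "isCont (\<lambda>x. t0 a (fst x) (fst (snd x))) x" by (simp add: o_def)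
    have ic2: "isCont (\<lambda>x. (fst x, t0 a (fst x) (fst (snd x)))) x"
      by (intro continuous_intros ic1)
    have ic3: "isCont Gt (fst x, t0 a (fst x) (fst (snd x)))"
      using Gt_cont[of \<tau> "t0 a \<tau> \<rho>"] tr tp xx by auto
    have "isCont (Gt \<circ> (\<lambda>x. (fst x, t0 a (fst x) (fst (snd x))))) x"
      by (rule continuous_at_compose[OF ic2 ic3])
    then show ?thesis unfolding F_def by (simp add: o_def)
  qed
  then have "continuous_on (D_polar a \<theta>0 \<phi>0) F" by (intro continuous_at_imp_continuous_on) auto
  then show ?thesis
  proof (rule continuous_on_eq)
    fix x assume "x \<in> D_polar a \<theta>0 \<phi>0"
    then have "0 < fst x" by (auto simp: D_polar_def)
    then show "F x = g_thth a (fst x) (fst (snd x))" by (simp add: F_def g_thth_Gt)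
  qed
qed

end

theorem corollary7p4:
  fixes a :: "real \<Rightarrow> real" and \<theta>0 \<phi>0 :: real
  assumes reg: "regular_scale_factor a"
    and even: "\<And>t. a (- t) = a t"
    and zero_cond:
      "(\<exists>L. 0 < L \<and> (deriv a \<longlongrightarrow> L) (at_right 0)) \<or>
       ((a has_real_derivative 0) (at 0) \<and>
        (\<exists>n D e. 0 < e \<and> D 0 = a \<and> D n 0 \<noteq> 0 \<and>
           (\<forall>k<n. \<forall>t. \<bar>t\<bar> < e \<and> (Suc k < n \<or> t = 0) \<longrightarrow>
              (D k has_real_derivative D (Suc k) t) (at t))))"
  shows "continuous_on (D_polar a \<theta>0 \<phi>0) (\<lambda>(\<tau>, \<rho>, \<theta>, \<phi>). g_thth a \<tau> \<rho>)
       \<and> continuous_on (D_polar a \<theta>0 \<phi>0) (\<lambda>(\<tau>, \<rho>, \<theta>, \<phi>). g_phph a \<tau> \<rho> \<theta>)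
       \<and> (\<forall>\<tau>>0. ((\<lambda>u. (a u)\<^sup>2 * (chi a \<bar>u\<bar> \<tau>)\<^sup>2) \<longlongrightarrow> 0) (at 0)
                 \<and> g_thth a \<tau> (rhoM a \<tau>) = 0
                 \<and> (\<forall>\<theta>. g_phph a \<tau> (rhoM a \<tau>) \<theta> = 0))"
proof -
  from reg obtain a' a'' where
    a0: "a 0 = 0" and sm: "strict_mono_on {0..} a" and c0: "continuous_on {0..} a"
    and der: "\<forall>t>0. (a has_real_derivative a' t) (at t) \<and> (a' has_real_derivative a'' t) (at t)"
    and ca2: "continuous_on {0<..} a''"
    and dn: "\<forall>t>0. deriv a t \<noteq> 0"
    unfolding regular_scale_factor_def by blast
  interpret S: sf a a' a''
  proof
    show "a 0 = 0" by (rule a0)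
    show "\<And>t. a (- t) = a t" by (rule even)
    show "strict_mono_on {0..} a" by (rule sm)
    show "continuous_on {0..} a" by (rule c0)
    show "\<And>t. 0 < t \<Longrightarrow> (a has_real_derivative a' t) (at t)" using der by blast
    show "\<And>t. 0 < t \<Longrightarrow> (a' has_real_derivative a'' t) (at t)" using der by blast
    show "continuous_on {0<..} a''" by (rule ca2)
    show "\<And>t. 0 < t \<Longrightarrow> a' t \<noteq> 0"
    proof -
      fix t :: real assume t: "0 < t"
      have "deriv a t = a' t" using der t by (blast intro: DERIV_imp_deriv)
      then show "a' t \<noteq> 0" using dn t by metis
    qed
  qed
  have C1: "continuous_on (D_polar a \<theta>0 \<phi>0) (\<lambda>x. g_thth a (fst x) (fst (snd x)))"
    by (rule S.main_cont)
  have P1: "continuous_on (D_polar a \<theta>0 \<phi>0) (\<lambda>(\<tau>, \<rho>, \<theta>, \<phi>). g_thth a \<tau> \<rho>)"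
    using C1 by (simp add: case_prod_beta)
  have C2: "continuous_on (D_polar a \<theta>0 \<phi>0) (\<lambda>x. g_thth a (fst x) (fst (snd x)) * (sin (fst (snd (snd x))))\<^sup>2)"
    by (intro continuous_intros C1)
  have P2: "continuous_on (D_polar a \<theta>0 \<phi>0) (\<lambda>(\<tau>, \<rho>, \<theta>, \<phi>). g_phph a \<tau> \<rho> \<theta>)"
    using C2 by (simp add: case_prod_beta g_phph_def)
  have P3: "\<forall>\<tau>>0. ((\<lambda>u. (a u)\<^sup>2 * (chi a \<bar>u\<bar> \<tau>)\<^sup>2) \<longlongrightarrow> 0) (at 0)
                 \<and> g_thth a \<tau> (rhoM a \<tau>) = 0
                 \<and> (\<forall>\<theta>. g_phph a \<tau> (rhoM a \<tau>) \<theta> = 0)"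
  proof (intro allI impI conjI)
    fix \<tau> :: real assume \<tau>: "0 < \<tau>"
    show "((\<lambda>u. (a u)\<^sup>2 * (chi a \<bar>u\<bar> \<tau>)\<^sup>2) \<longlongrightarrow> 0) (at 0)" by (rule S.Gt_lim[OF \<tau>])
    have t00: "t0 a \<tau> (rhoM a \<tau>) = 0" using S.t0_eq[of \<tau> 0] \<tau> by (simp add: S.rhoM_Iv)
    show g0: "g_thth a \<tau> (rhoM a \<tau>) = 0" using S.g_thth_Gt[OF \<tau>] t00 by (simp add: S.Gt_def)
    fix \<theta> show "g_phph a \<tau> (rhoM a \<tau>) \<theta> = 0" by (simp add: g_phph_def g0)
  qed
  show ?thesis using P1 P2 P3 by blast
qed


end
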